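(* Let $\mathcal F$ be a filtration sequence, $E=(E_{m,n})_{m,n\in\mathbb N}$ a nonnegative process adapted to $\mathcal F$, and $r$ an extended integer sequence. Then the following two conditions are equivalent: (a) for every $\tau=(\tau_m)_{m\in\mathbb N}\in\mathcal T_{\mathrm{fin}}(r,\mathcal F,\mathcal P)$, $\limsup_{m\to\infty}\sup_{P\in\mathcal P}\mathbb E_P[E_{m,\tau_m}]\le 1$; (b) $\limsup_{m\to\infty}\sup_{\tau\in\mathcal T_{\mathrm{fin}}(r_m,\mathcal F_{m,\bullet},\mathcal P)}\sup_{P\in\mathcal P}\mathbb E_P[E_{m,\tau}]\le 1$. Moreover, if they hold, there exists $m_0\in\mathbb N$ such that $\sup_{P\in\mathcal P}\mathbb E_P[E_{m,n}]<\infty$ for all $m\ge m_0$ and all $n\in\mathbb N$ with $n\le r_m$; in particular such $E_{m,n}$ are $P$-integrable for every $P\in\mathcal P$.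
   Context: $(\Omega,\mathcal A)$ is a measurable space and $\mathcal P$ a set of probability measures on it. $\mathbb N=\{0,1,\dots\}$; an extended integer is an element of $\mathbb N\cup\{\infty\}$. Nonnegative random variables take values in $[0,\infty]$ with $\mathbb E_P[X]:=\infty$ if not $P$-integrable. A filtration sequence is a family $(\mathcal F_{m,n})_{m,n\in\mathbb N}$ of sub-$\sigma$-algebras of $\mathcal A$ such that each $\mathcal F_{m,\bullet}$ is a filtration; adapted means $E_{m,n}$ is $\mathcal F_{m,n}$-measurable. For a filtration $\mathcal G$ and $\rho\in\mathbb N\cup\{\infty\}$, $\mathcal T(\rho,\mathcal G,\mathcal P)$ is the set of $\mathcal G$-stopping times $\tau$ (values in $\mathbb N\cup\{\infty\}$) with $P[\tau\le\rho]=1$ for all $P\in\mathcal P$, and $\mathcal T_{\mathrm{fin}}(\rho,\mathcal G,\mathcal P)$ is its subset of stopping times with $\tau(\omega)<\infty$ for every $\omega\in\Omega$. $\mathcal T_{\mathrm{fin}}(r,\mathcal F,\mathcal P)$ is the set of sequences $(\tau_m)_{m}$ with $\tau_m\in\mathcal T_{\mathrm{fin}}(r_m,\mathcal F_{m,\bullet},\mathcal P)$ for all $m$. *)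

theory Defs
  imports "HOL-Probability.Probability"
begin

definition filtration_sequence :: "'a measure \<Rightarrow> (nat \<Rightarrow> nat \<Rightarrow> 'a measure) \<Rightarrow> bool" where
  "filtration_sequence M F \<longleftrightarrow>
     (\<forall>m. filtration (space M) (F m)) \<and> (\<forall>m n. sets (F m n) \<subseteq> sets M)"

text \<open>T_fin(rho, G, Ps): G-stopping times that are finite everywhere (hence nat-valued)
  and satisfy P[tau <= rho] = 1 for all P in Ps.\<close>
definition Tfin :: "enat \<Rightarrow> (nat \<Rightarrow> 'a measure) \<Rightarrow> 'a measure set \<Rightarrow> ('a \<Rightarrow> nat) set" where
  "Tfin \<rho> G Ps = {\<tau>. stopping_time G \<tau> \<and>
      (\<forall>P\<in>Ps. emeasure P {\<omega> \<in> space P. enat (\<tau> \<omega>) \<le> \<rho>} = 1)}"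

end

theory Submission
  imports Defs
begin

lemma Tfin_const:
  assumes Ps: "\<And>P. P \<in> Ps \<Longrightarrow> prob_space P \<and> sets P = sets M"
    and n: "enat n \<le> \<rho>"
  shows "(\<lambda>_. n) \<in> Tfin \<rho> G Ps"
  unfolding Tfin_def
proof (intro CollectI conjI ballI stopping_time_const)
  fix P assume "P \<in> Ps"
  then have "prob_space P" using Ps by auto
  then show "emeasure P {\<omega> \<in> space P. enat n \<le> \<rho>} = 1"
    using n by (simp add: prob_space.emeasure_space_1)
qed

lemma Tfin_ne:
  assumes Ps: "\<And>P. P \<in> Ps \<Longrightarrow> prob_space P \<and> sets P = sets M"
  shows "(\<lambda>_. 0) \<in> Tfin \<rho> G Ps"
  using Tfin_const[OF Ps, where n=0 and \<rho>=\<rho> and G=G] by (simp add: zero_enat_def[symmetric])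

theorem mainTheorem3:
  fixes M :: "'a measure" and Ps :: "'a measure set"
    and F :: "nat \<Rightarrow> nat \<Rightarrow> 'a measure"
    and E :: "nat \<Rightarrow> nat \<Rightarrow> 'a \<Rightarrow> ennreal"
    and r :: "nat \<Rightarrow> enat"
  assumes Ps: "\<And>P. P \<in> Ps \<Longrightarrow> prob_space P \<and> sets P = sets M"
    and F: "filtration_sequence M F"
    and adapted: "\<And>m n. E m n \<in> borel_measurable (F m n)"
  shows "((\<forall>\<tau>. (\<forall>m. \<tau> m \<in> Tfin (r m) (F m) Ps) \<longrightarrow>
            limsup (\<lambda>m. SUP P\<in>Ps. \<integral>\<^sup>+ \<omega>. E m (\<tau> m \<omega>) \<omega> \<partial>P) \<le> 1)
         \<longleftrightarrow>
         limsup (\<lambda>m. SUP \<tau>\<in>Tfin (r m) (F m) Ps. SUP P\<in>Ps. \<integral>\<^sup>+ \<omega>. E m (\<tau> \<omega>) \<omega> \<partial>P) \<le> 1)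
       \<and>
       ((\<forall>\<tau>. (\<forall>m. \<tau> m \<in> Tfin (r m) (F m) Ps) \<longrightarrow>
            limsup (\<lambda>m. SUP P\<in>Ps. \<integral>\<^sup>+ \<omega>. E m (\<tau> m \<omega>) \<omega> \<partial>P) \<le> 1)
        \<longrightarrow> (\<exists>m0. \<forall>m\<ge>m0. \<forall>n. enat n \<le> r m \<longrightarrow>
              (SUP P\<in>Ps. \<integral>\<^sup>+ \<omega>. E m n \<omega> \<partial>P) < \<infinity> \<and>
              (\<forall>P\<in>Ps. integrable P (\<lambda>\<omega>. enn2real (E m n \<omega>)) \<and>
                       (AE \<omega> in P. E m n \<omega> < \<infinity>))))"
proof -
  define g where "g m \<tau> = (SUP P\<in>Ps. \<integral>\<^sup>+ \<omega>. E m (\<tau> \<omega>) \<omega> \<partial>P)" for m and \<tau> :: "'a \<Rightarrow> nat"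
  define S where "S m = (SUP \<tau>\<in>Tfin (r m) (F m) Ps. g m \<tau>)" for m
  have AB: "(\<forall>\<tau>. (\<forall>m. \<tau> m \<in> Tfin (r m) (F m) Ps) \<longrightarrow> limsup (\<lambda>m. g m (\<tau> m)) \<le> 1)
        \<longleftrightarrow> limsup S \<le> 1"
  proof
    assume B: "limsup S \<le> 1"
    show "\<forall>\<tau>. (\<forall>m. \<tau> m \<in> Tfin (r m) (F m) Ps) \<longrightarrow> limsup (\<lambda>m. g m (\<tau> m)) \<le> 1"
    proof (intro allI impI)
      fix \<tau> assume t: "\<forall>m. \<tau> m \<in> Tfin (r m) (F m) Ps"
      have "limsup (\<lambda>m. g m (\<tau> m)) \<le> limsup S"
        using t unfolding S_def by (intro Limsup_mono always_eventually allI SUP_upper) auto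
      then show "limsup (\<lambda>m. g m (\<tau> m)) \<le> 1" using B by simp
    qed
  next
    assume A: "\<forall>\<tau>. (\<forall>m. \<tau> m \<in> Tfin (r m) (F m) Ps) \<longrightarrow> limsup (\<lambda>m. g m (\<tau> m)) \<le> 1"
    show "limsup S \<le> 1"
    proof (rule ccontr)
      assume "\<not> limsup S \<le> 1"
      then have "1 < limsup S" by simp
      then obtain c where c: "1 < c" "c < limsup S" using dense by blast
      have fr: "frequently (\<lambda>m. c < S m) sequentially"
      proof (rule ccontr)
        assume "\<not> frequently (\<lambda>m. c < S m) sequentially"
        then have "eventually (\<lambda>m. S m \<le> c) sequentially"
          by (simp add: not_frequently not_less)
        then have "limsup S \<le> c" by (rule Limsup_bounded)
        then show False using c by simp
      qed
      define \<tau> where "\<tau> m = (if c < S m then (SOME t. t \<in> Tfin (r m) (F m) Ps \<and> c < g m t)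
                             else (\<lambda>_. 0))" for m
      have t: "\<tau> m \<in> Tfin (r m) (F m) Ps \<and> (c < S m \<longrightarrow> c < g m (\<tau> m))" for m
      proof (cases "c < S m")
        case True
        then have "\<exists>t. t \<in> Tfin (r m) (F m) Ps \<and> c < g m t"
          unfolding S_def by (auto simp add: less_SUP_iff)
        then have "(SOME t. t \<in> Tfin (r m) (F m) Ps \<and> c < g m t) \<in> Tfin (r m) (F m) Ps \<and> c < g m (SOME t. t \<in> Tfin (r m) (F m) Ps \<and> c < g m t)" by (rule someI_ex)
        then show ?thesis using True unfolding \<tau>_def by simp
      next
        case False
        then show ?thesis unfolding \<tau>_def using Tfin_ne[OF Ps] by simp
      qed
      have "frequently (\<lambda>m. c < g m (\<tau> m)) sequentially"
        using fr t by (auto elim: frequently_elim1)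
      then have "c \<le> limsup (\<lambda>m. g m (\<tau> m))"
      proof (rule contrapos_pp)
        assume "\<not> c \<le> limsup (\<lambda>m. g m (\<tau> m))"
        then have "eventually (\<lambda>m. g m (\<tau> m) < c) sequentially"
          by (intro Limsup_lessD) simp
        then show "\<not> frequently (\<lambda>m. c < g m (\<tau> m)) sequentially"
          by (simp add: not_frequently eventually_mono)
      qed
      moreover have "limsup (\<lambda>m. g m (\<tau> m)) \<le> 1" using A t by blast
      ultimately show False using c by simp
    qed
  qed
  have fin: "\<exists>m0. \<forall>m\<ge>m0. \<forall>n. enat n \<le> r m \<longrightarrow>
              (SUP P\<in>Ps. \<integral>\<^sup>+ \<omega>. E m n \<omega> \<partial>P) < \<infinity> \<and>
              (\<forall>P\<in>Ps. integrable P (\<lambda>\<omega>. enn2real (E m n \<omega>)) \<and>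
                       (AE \<omega> in P. E m n \<omega> < \<infinity>))"
    if B: "limsup S \<le> 1"
  proof -
    have "limsup S < 2" using B by (rule le_less_trans) simp
    then have "eventually (\<lambda>m. S m < 2) sequentially" by (rule Limsup_lessD)
    then obtain m0 where m0: "\<And>m. m \<ge> m0 \<Longrightarrow> S m < 2" by (auto simp: eventually_sequentially)
    show ?thesis
    proof (intro exI allI impI conjI ballI)
      fix m n P assume m: "m0 \<le> m" and n: "enat n \<le> r m"
      have "g m (\<lambda>_. n) \<le> S m"
        unfolding S_def by (rule SUP_upper) (rule Tfin_const[OF Ps n])
      then have g2: "g m (\<lambda>_. n) < 2" using m0[OF m] by simp
      have two: "(2::ennreal) < \<infinity>" by simp
      from less_trans[OF g2 two] show "(SUP P\<in>Ps. \<integral>\<^sup>+ \<omega>. E m n \<omega> \<partial>P) < \<infinity>"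
        unfolding g_def .
      assume P: "P \<in> Ps"
      have "(\<integral>\<^sup>+ \<omega>. E m n \<omega> \<partial>P) \<le> g m (\<lambda>_. n)"
        unfolding g_def using P by (intro SUP_upper) auto
      then have "(\<integral>\<^sup>+ \<omega>. E m n \<omega> \<partial>P) < 2" using g2 by (rule le_less_trans)
      then have fi: "(\<integral>\<^sup>+ \<omega>. E m n \<omega> \<partial>P) < \<infinity>" using two by (rule less_trans)
      have sP: "sets P = sets M" using Ps P by auto
      have "sets (F m n) \<subseteq> sets M" using F unfolding filtration_sequence_def by auto
      moreover have "space (F m n) = space M"
        using F unfolding filtration_sequence_def filtration_def by auto
      ultimately have meas: "E m n \<in> borel_measurable P"
      proof -
        have "subalgebra P (F m n)" unfolding subalgebra_def
          using sP sets_eq_imp_space_eq[OF sP] \<open>sets (F m n) \<subseteq> sets M\<close> \<open>space (F m n) = space M\<close> by simp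
        then show ?thesis using adapted[of m n] by (rule measurable_from_subalg)
      qed
      show "AE \<omega> in P. E m n \<omega> < \<infinity>"
        using nn_integral_PInf_AE[OF meas] fi by (simp add: top.not_eq_extremum)
      show "integrable P (\<lambda>\<omega>. enn2real (E m n \<omega>))"
      proof (rule integrableI_bounded)
        show "(\<lambda>\<omega>. enn2real (E m n \<omega>)) \<in> borel_measurable P" using meas by simp
        have "(\<integral>\<^sup>+ \<omega>. ennreal (norm (enn2real (E m n \<omega>))) \<partial>P) \<le> (\<integral>\<^sup>+ \<omega>. E m n \<omega> \<partial>P)"
          by (intro nn_integral_mono) (simp add: ennreal_enn2real_if)
        then show "(\<integral>\<^sup>+ \<omega>. ennreal (norm (enn2real (E m n \<omega>))) \<partial>P) < \<infinity>"
          using fi by (simp add: le_less_trans)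
      qed
    qed
  qed
  show ?thesis using AB fin unfolding g_def S_def by blast
qed

end
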